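(* Let $n$ be a positive integer, $k\ge 2$ an integer, and $\beta,\alpha_0,\alpha_1,\dots,\alpha_{n-1}$ non-negative integers with $0\le\beta\le k-1$. Then $$\det_{0\le i,j\le n-1}\bigl(C_{(k-1)\alpha_i+j+\beta,k}\bigr)=\prod_{0\le i<j\le n-1}(\alpha_j-\alpha_i)\prod_{i=0}^{n-1}\frac{((k-1)i+\beta+n)!\,(k\alpha_i+\beta)!}{(ki+\beta)!\,\alpha_i!\,((k-1)\alpha_i+\beta+n)!}.$$
   Context: For integers $k\ge2$ and $m\ge0$, the generalised Catalan number is $$C_{m,k}=\frac{m-(k-1)\lfloor\frac{m}{k-1}\rfloor+1}{m+\lfloor\frac{m}{k-1}\rfloor+1}\binom{m+\lfloor\frac{m}{k-1}\rfloor+1}{m+1}.$$ (Equivalently, $C_{m,k}$ is the number of lattice paths with unit steps $(1,0)$ and $(0,1)$ from $(0,0)$ to $(m,\lfloor m/(k-1)\rfloor)$ never passing above the line $x=(k-1)y$.) *)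

theory Defs
  imports Main "Jordan_Normal_Form.Determinant"
begin

definition gen_catalan :: "nat \<Rightarrow> nat \<Rightarrow> rat" where
  "gen_catalan m k =
     (let q = m div (k - 1) in
      of_nat (m - (k - 1) * q + 1) / of_nat (m + q + 1) * of_nat ((m + q + 1) choose (m + 1)))"

end

theory Submission imports Defs "HOL-Computational_Algebra.Polynomial" begin

lemma det_scale:
  fixes M :: "nat \<Rightarrow> nat \<Rightarrow> 'a::comm_ring_1"
  shows "det (mat n n (\<lambda>(i,j). r i * c j * M i j)) =
         (\<Prod>i<n. r i) * (\<Prod>j<n. c j) * det (mat n n (\<lambda>(i,j). M i j))"
proof -
  have "det (mat n n (\<lambda>(i,j). r i * c j * M i j)) =
    (\<Sum>p\<in>{p. p permutes {0..<n}}. signof p * (\<Prod>i=0..<n. r i * c (p i) * M i (p i)))"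
    by (subst det_def'[of _ n]) auto
  also have "\<dots> = (\<Sum>p\<in>{p. p permutes {0..<n}}. (\<Prod>i<n. r i) * (\<Prod>j<n. c j) * (signof p * (\<Prod>i=0..<n. M i (p i))))"
  proof (rule sum.cong[OF refl])
    fix p assume "p \<in> {p. p permutes {0..<n}}"
    then have p: "p permutes {0..<n}" by auto
    have "(\<Prod>i=0..<n. c (p i)) = (\<Prod>j=0..<n. c j)"
      using prod.permute[OF p, of c] by (simp add: comp_def)
    then show "signof p * (\<Prod>i=0..<n. r i * c (p i) * M i (p i)) =
      (\<Prod>i<n. r i) * (\<Prod>j<n. c j) * (signof p * (\<Prod>i=0..<n. M i (p i)))"
      by (simp add: prod.distrib atLeast0LessThan)
  qed
  also have "\<dots> = (\<Prod>i<n. r i) * (\<Prod>j<n. c j) * det (mat n n (\<lambda>(i,j). M i j))"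
    by (subst det_def'[of _ n]) (auto simp: sum_distrib_left)
  finally show ?thesis .
qed

lemma det_colop:
  fixes N :: "nat \<Rightarrow> nat \<Rightarrow> 'a::comm_ring_1"
  shows "det (mat n n (\<lambda>(i,j). N i j + (\<Sum>s<j. w j s * N i s))) = det (mat n n (\<lambda>(i,j). N i j))"
proof -
  define U where "U = mat n n (\<lambda>(s,j). if s = j then 1 else if s < j then w j s else (0::'a))"
  have U: "U \<in> carrier_mat n n" unfolding U_def by auto
  have dU: "det U = 1"
    by (subst det_upper_triangular[OF _ U]) (auto simp: U_def upper_triangular_def prod_list_diag_prod)
  have eq: "mat n n (\<lambda>(i,j). N i j + (\<Sum>s<j. w j s * N i s)) = mat n n (\<lambda>(i,j). N i j) * U"
  proof (rule eq_matI)
    fix i j assume i: "i < dim_row (mat n n (\<lambda>(i,j). N i j) * U)" and j: "j < dim_col (mat n n (\<lambda>(i,j). N i j) * U)"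
    then have i: "i < n" and j: "j < n" using U by auto
    have "(mat n n (\<lambda>(i,j). N i j) * U) $$ (i,j) = (\<Sum>s<n. N i s * U $$ (s,j))"
      using i j U by (simp add: scalar_prod_def atLeast0LessThan)
    also have "\<dots> = (\<Sum>s<n. (if s = j then N i j else if s < j then w j s * N i s else 0))"
      using j by (intro sum.cong) (auto simp: U_def)
    also have "\<dots> = N i j + (\<Sum>s<j. w j s * N i s)"
    proof -
      have "{..<n} = {..<j} \<union> {j} \<union> {Suc j..<n}" using j by auto
      moreover have "({..<j} \<union> {Suc j..<n}) \<inter> - {j} \<inter> {s. s < j} = {..<j}" by auto
      ultimately show ?thesis by (simp add: sum.union_disjoint sum.If_cases)
    qed
    finally show "mat n n (\<lambda>(i,j). N i j + (\<Sum>s<j. w j s * N i s)) $$ (i,j) = (mat n n (\<lambda>(i,j). N i j) * U) $$ (i,j)"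
      using i j by simp
  qed (use U in auto)
  show ?thesis unfolding eq by (subst det_mult[of _ n]) (auto simp: U dU)
qed
definition KM :: "nat \<Rightarrow> rat \<Rightarrow> rat \<Rightarrow> (nat \<Rightarrow> rat) \<Rightarrow> (nat \<Rightarrow> rat) \<Rightarrow> (nat \<Rightarrow> rat) \<Rightarrow> rat mat" where
  "KM n a b X A B = mat n n (\<lambda>(i,j). (\<Prod>t\<in>{1..j}. a * X i + A t) * (\<Prod>t\<in>{Suc j..<n}. b * X i + B t))"

lemma vand_split:
  "(\<Prod>i<Suc n. \<Prod>j\<in>{i<..<Suc n}. f i j) = (\<Prod>j\<in>{1..n}. f 0 j) * (\<Prod>i<n. \<Prod>j\<in>{i<..<n}. f (Suc i) (Suc j))"
proof -
  have "(\<Prod>i<Suc n. \<Prod>j\<in>{i<..<Suc n}. f i j) = (\<Prod>j\<in>{0<..<Suc n}. f 0 j) * (\<Prod>i<n. \<Prod>j\<in>{Suc i<..<Suc n}. f (Suc i) j)"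
    by (rule prod.lessThan_Suc_shift)
  moreover have "{0<..<Suc n} = {1..n}" by auto
  moreover have "(\<Prod>j\<in>{Suc i<..<Suc n}. f (Suc i) j) = (\<Prod>j\<in>{i<..<n}. f (Suc i) (Suc j))" for i
  proof -
    have e1: "{Suc i<..<Suc n} = {Suc (Suc i)..<Suc n}" and e2: "{i<..<n} = {Suc i..<n}" by auto
    show ?thesis unfolding e1 e2 by (rule prod.shift_bounds_Suc_ivl)
  qed
  ultimately show ?thesis by simp
qed

lemma prod_1_Suc: "(\<Prod>t\<in>{1..Suc j}. g t) = g 1 * (\<Prod>t\<in>{1..j}. g (Suc t))"
proof -
  have "(\<Prod>t\<in>{1..Suc j}. g t) = g 1 * (\<Prod>t\<in>{Suc 1..Suc j}. g t)" by (rule prod.atLeast_Suc_atMost) simp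
  also have "(\<Prod>t\<in>{Suc 1..Suc j}. g t) = (\<Prod>t\<in>{1..j}. g (Suc t))" by (rule prod.shift_bounds_cl_Suc_ivl)
  finally show ?thesis .
qed

lemma kratt:
  fixes a b :: rat and X A B :: "nat \<Rightarrow> rat"
  assumes "a \<noteq> 0" "\<And>i t. 0 < t \<Longrightarrow> a * X i + A t \<noteq> 0"
  shows "det (KM n a b X A B) = (\<Prod>i<n. \<Prod>j\<in>{i<..<n}. X j - X i) *
     (\<Prod>s<n. \<Prod>t\<in>{1..<n-s}. a * B (s+t) - b * A (Suc s))"
  using assms(2)
proof (induction n arbitrary: X A B)
  case 0
  then show ?case by (simp add: KM_def)
next
  case (Suc n)
  note nz = Suc.prems
  let ?m = "Suc n"
  define row0 where "row0 y j = (\<Prod>t\<in>{1..j}. a * y + A t) * (\<Prod>t\<in>{Suc j..<?m}. b * y + B t)" for y j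
  define My where "My y = KM ?m a b (X(0:=y)) A B" for y
  define cof where "cof j = cofactor (KM ?m a b X A B) 0 j" for j
  have MyX: "My (X 0) = KM ?m a b X A B" unfolding My_def by simp
  have cof_indep: "cofactor (My y) 0 j = cof j" for y j
  proof -
    have "mat_delete (My y) 0 j = mat_delete (KM ?m a b X A B) 0 j"
      unfolding mat_delete_def My_def KM_def by (rule eq_matI) auto
    then show ?thesis unfolding cofactor_def cof_def by simp
  qed
  have fexp: "det (My y) = (\<Sum>j<?m. row0 y j * cof j)" for y
  proof -
    have "det (My y) = (\<Sum>j<?m. My y $$ (0,j) * cofactor (My y) 0 j)"
      by (rule laplace_expansion_row) (auto simp: My_def KM_def)
    also have "\<dots> = (\<Sum>j<?m. row0 y j * cof j)"
    proof (rule sum.cong[OF refl])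
      fix j assume "j \<in> {..<?m}"
      then have "My y $$ (0,j) = row0 y j" unfolding My_def KM_def row0_def by simp
      then show "My y $$ (0,j) * cofactor (My y) 0 j = row0 y j * cof j" by (simp add: cof_indep)
    qed
    finally show ?thesis .
  qed
  define P where "P = (\<Sum>j<?m. smult (cof j) ((\<Prod>t\<in>{1..j}. [:A t, a:]) * (\<Prod>t\<in>{Suc j..<?m}. [:B t, b:])))"
  have polyP: "poly P y = det (My y)" for y
    unfolding fexp P_def row0_def by (simp add: poly_sum poly_prod algebra_simps)
  have degP: "degree P \<le> n"
    unfolding P_def
  proof (rule degree_sum_le)
    fix j assume j: "j \<in> {..<?m}"
    have d1: "degree (\<Prod>t\<in>{1..j}. [:A t, a:]) \<le> j"
      by (rule order.trans[OF degree_prod_sum_le]) (auto intro: order.trans[OF sum_mono[of _ _ "\<lambda>_. 1"]])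
    have d2: "degree (\<Prod>t\<in>{Suc j..<?m}. [:B t, b:]) \<le> n - j"
      by (rule order.trans[OF degree_prod_sum_le]) (auto intro: order.trans[OF sum_mono[of _ _ "\<lambda>_. 1"]])
    show "degree (smult (cof j) ((\<Prod>t\<in>{1..j}. [:A t, a:]) * (\<Prod>t\<in>{Suc j..<?m}. [:B t, b:]))) \<le> n"
      using j by (intro order.trans[OF degree_smult_le] order.trans[OF degree_mult_le]) (use d1 d2 in auto)
  qed auto
  have zeros: "det (My (X i)) = 0" if i: "i \<in> {1..n}" for i
  proof (rule det_identical_rows[of _ ?m 0 i])
    show "row (My (X i)) 0 = row (My (X i)) i"
      by (rule eq_vecI) (use i in \<open>auto simp: My_def KM_def\<close>)
  qed (use i in \<open>auto simp: My_def KM_def\<close>)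
  define y0 where "y0 = - A 1 / a"
  have ay0: "a * y0 + A 1 = 0" unfolding y0_def using assms(1) by simp
  have valy0: "det (My y0) = row0 y0 0 * cof 0"
  proof -
    have "(\<Sum>j<?m. row0 y0 j * cof j) = row0 y0 0 * cof 0 + (\<Sum>j<n. row0 y0 (Suc j) * cof (Suc j))"
      by (rule sum.lessThan_Suc_shift)
    moreover have "row0 y0 (Suc j) = 0" for j
    proof -
      have "(\<Prod>t\<in>{1..Suc j}. a * y0 + A t) = 0"
        by (rule prod_zero) (use ay0 in auto)
      then show ?thesis unfolding row0_def by simp
    qed
    ultimately show ?thesis by (simp add: fexp)
  qed
  have cof0: "cof 0 = (\<Prod>i<n. a * X (Suc i) + A 1) * det (KM n a b (X \<circ> Suc) (A \<circ> Suc) (B \<circ> Suc))"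
  proof -
    have "mat_delete (KM ?m a b X A B) 0 0 = mat n n (\<lambda>(i,j). (a * X (Suc i) + A 1) * 1 *
        ((\<Prod>t\<in>{1..j}. a * (X \<circ> Suc) i + (A \<circ> Suc) t) * (\<Prod>t\<in>{Suc j..<n}. b * (X \<circ> Suc) i + (B \<circ> Suc) t)))"
    proof (rule eq_matI)
      fix i j assume "i < dim_row (mat n n (\<lambda>(i,j). (a * X (Suc i) + A 1) * 1 *
        ((\<Prod>t\<in>{1..j}. a * (X \<circ> Suc) i + (A \<circ> Suc) t) * (\<Prod>t\<in>{Suc j..<n}. b * (X \<circ> Suc) i + (B \<circ> Suc) t))))"
        "j < dim_col (mat n n (\<lambda>(i,j). (a * X (Suc i) + A 1) * 1 *
        ((\<Prod>t\<in>{1..j}. a * (X \<circ> Suc) i + (A \<circ> Suc) t) * (\<Prod>t\<in>{Suc j..<n}. b * (X \<circ> Suc) i + (B \<circ> Suc) t))))"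
      then have i: "i < n" and j: "j < n" by auto
      have p1: "(\<Prod>t\<in>{1..Suc j}. a * X (Suc i) + A t) = (a * X (Suc i) + A 1) * (\<Prod>t\<in>{1..j}. a * X (Suc i) + A (Suc t))"
        by (rule prod_1_Suc)
      have p2: "(\<Prod>t\<in>{Suc (Suc j)..<Suc n}. b * X (Suc i) + B t) = (\<Prod>t\<in>{Suc j..<n}. b * X (Suc i) + B (Suc t))"
        by (rule prod.shift_bounds_Suc_ivl)
      show "mat_delete (KM ?m a b X A B) 0 0 $$ (i, j) = mat n n (\<lambda>(i,j). (a * X (Suc i) + A 1) * 1 *
        ((\<Prod>t\<in>{1..j}. a * (X \<circ> Suc) i + (A \<circ> Suc) t) * (\<Prod>t\<in>{Suc j..<n}. b * (X \<circ> Suc) i + (B \<circ> Suc) t))) $$ (i, j)"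
      proof -
        have "mat_delete (KM ?m a b X A B) 0 0 $$ (i,j) = (\<Prod>t\<in>{1..Suc j}. a*X(Suc i)+A t) * (\<Prod>t\<in>{Suc (Suc j)..<Suc n}. b*X(Suc i)+B t)"
          using i j by (simp add: mat_delete_def KM_def del: prod.cl_ivl_Suc prod.op_ivl_Suc)
        then show ?thesis unfolding p1 p2 using i j by (simp del: prod.cl_ivl_Suc prod.op_ivl_Suc)
      qed
    qed (auto simp: mat_delete_def KM_def)
    then show ?thesis
      unfolding cof_def cofactor_def by (simp add: det_scale[where c="\<lambda>_. 1", simplified] KM_def)
  qed
  have IH: "det (KM n a b (X \<circ> Suc) (A \<circ> Suc) (B \<circ> Suc)) =
     (\<Prod>i<n. \<Prod>j\<in>{i<..<n}. X (Suc j) - X (Suc i)) *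
     (\<Prod>s<n. \<Prod>t\<in>{1..<n-s}. a * B (Suc (s+t)) - b * A (Suc (Suc s)))"
    using Suc.IH[of "X \<circ> Suc" "A \<circ> Suc" "B \<circ> Suc"] nz by (simp add: comp_def)
  have RHS: "(\<Prod>i<?m. \<Prod>j\<in>{i<..<?m}. X j - X i) *
     (\<Prod>s<?m. \<Prod>t\<in>{1..<?m-s}. a * B (s+t) - b * A (Suc s)) =
     (\<Prod>j\<in>{1..n}. X j - X 0) * (\<Prod>t\<in>{1..n}. a * B t - b * A 1) *
     ((\<Prod>i<n. \<Prod>j\<in>{i<..<n}. X (Suc j) - X (Suc i)) *
     (\<Prod>s<n. \<Prod>t\<in>{1..<n-s}. a * B (Suc (s+t)) - b * A (Suc (Suc s))))"
  proof -
    have c: "(\<Prod>s<?m. \<Prod>t\<in>{1..<?m-s}. a * B (s+t) - b * A (Suc s)) =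
      (\<Prod>t\<in>{1..n}. a * B t - b * A 1) * (\<Prod>s<n. \<Prod>t\<in>{1..<n-s}. a * B (Suc (s+t)) - b * A (Suc (Suc s)))"
    proof -
      have "(\<Prod>s<?m. \<Prod>t\<in>{1..<?m-s}. a * B (s+t) - b * A (Suc s)) =
        (\<Prod>t\<in>{1..<?m-0}. a * B (0+t) - b * A (Suc 0)) * (\<Prod>s<n. \<Prod>t\<in>{1..<?m-Suc s}. a * B (Suc s+t) - b * A (Suc (Suc s)))"
        by (rule prod.lessThan_Suc_shift)
      moreover have "{1..<?m} = {1..n}" by auto
      ultimately show ?thesis by (simp only: diff_zero diff_Suc_Suc add_0 add_Suc One_nat_def)
    qed
    show ?thesis unfolding c vand_split[of "\<lambda>i j. X j - X i" n] by (simp only: mult_ac)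
  qed
  show ?case
  proof (cases "inj_on X {1..n}")
    case False
    then obtain i j where ij: "i \<in> {1..n}" "j \<in> {1..n}" "i < j" "X i = X j"
      unfolding inj_on_def by (metis linorder_neqE_nat)
    have "det (KM ?m a b X A B) = 0"
    proof (rule det_identical_rows[of _ ?m i j])
      show "row (KM ?m a b X A B) i = row (KM ?m a b X A B) j"
        by (rule eq_vecI) (use ij in \<open>auto simp: KM_def\<close>)
    qed (use ij in \<open>auto simp: KM_def\<close>)
    moreover have "(\<Prod>i<?m. \<Prod>j\<in>{i<..<?m}. X j - X i) = 0"
    proof (rule prod_zero)
      show "\<exists>a\<in>{..<?m}. (\<Prod>j\<in>{a<..<?m}. X j - X a) = 0"
        by (rule bexI[of _ i], rule prod_zero) (use ij in auto)
    qed simp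
    ultimately show ?thesis by simp
  next
    case True
    define Z where "Z = (\<Prod>i\<in>{1..n}. y0 - X i)"
    have y0X: "y0 - X i \<noteq> 0" for i
    proof
      assume "y0 - X i = 0"
      then have "a * X i + A 1 = 0" using ay0 by (simp add: algebra_simps)
      then show False using nz[of 1 i] by simp
    qed
    have Znz: "Z \<noteq> 0" unfolding Z_def using y0X by simp
    define K where "K = det (My y0) / Z"
    define Q where "Q = smult K (\<Prod>i\<in>{1..n}. [:- X i, 1:])"
    have polyQ: "poly Q y = K * (\<Prod>i\<in>{1..n}. y - X i)" for y
      unfolding Q_def by (simp add: poly_prod)
    have degQ: "degree Q \<le> n"
      unfolding Q_def
      by (rule order.trans[OF degree_smult_le], rule order.trans[OF degree_prod_sum_le]) auto
    have "P = Q"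
    proof (rule poly_eqI_degree[of "insert y0 (X ` {1..n})"])
      fix x assume "x \<in> insert y0 (X ` {1..n})"
      then show "poly P x = poly Q x"
      proof
        assume "x = y0"
        have "poly Q y0 = K * Z" unfolding polyQ Z_def ..
        then show ?thesis using Znz \<open>x = y0\<close> by (simp add: polyP K_def)
      next
        assume "x \<in> X ` {1..n}"
        then obtain i where i: "i \<in> {1..n}" "x = X i" by auto
        have "(\<Prod>j\<in>{1..n}. X i - X j) = 0" by (rule prod_zero) (use i in auto)
        then have "poly Q x = 0" using i by (simp only: polyQ mult_zero_right)
        then show ?thesis using zeros[OF i(1)] i by (simp add: polyP)
      qed
    next
      have "y0 \<notin> X ` {1..n}" using y0X by auto
      moreover have "card (X ` {1..n}) = n" using True by (simp add: card_image)
      ultimately have "card (insert y0 (X ` {1..n})) = Suc n" by simp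
      then show "degree P < card (insert y0 (X ` {1..n}))" "degree Q < card (insert y0 (X ` {1..n}))"
        using degP degQ by auto
    qed
    then have main: "det (KM ?m a b X A B) = K * (\<Prod>i\<in>{1..n}. X 0 - X i)"
      using polyP[of "X 0"] polyQ[of "X 0"] MyX by simp
    define R0 where "R0 = row0 y0 0"
    have c1: "(\<Prod>i<n. a * X (Suc i) + A 1) = (-a)^n * Z"
    proof -
      have "(\<Prod>i<n. a * X (Suc i) + A 1) = (\<Prod>i<n. (-a) * (y0 - X (Suc i)))"
        by (rule prod.cong) (use ay0 in \<open>auto simp: algebra_simps\<close>)
      also have "\<dots> = (\<Prod>i<n. (-a)) * (\<Prod>i<n. y0 - X (Suc i))" by (rule prod.distrib)
      also have "(\<Prod>i<n. (-a)) = (-a)^n" by simp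
      also have "(\<Prod>i<n. y0 - X (Suc i)) = Z" unfolding Z_def by (simp add: prod.atLeast1_atMost_eq)
      finally show ?thesis .
    qed
    have c2: "(-a)^n * R0 * (\<Prod>i\<in>{1..n}. X 0 - X i) = (\<Prod>j\<in>{1..n}. X j - X 0) * (\<Prod>t\<in>{1..n}. a * B t - b * A 1)"
    proof -
      have R0: "R0 = (\<Prod>t\<in>{1..n}. b * y0 + B t)"
      proof -
        have "{Suc 0..<?m} = {1..n}" by auto
        then show ?thesis unfolding R0_def row0_def by simp
      qed
      have "(-a)^n * R0 * (\<Prod>i\<in>{1..n}. X 0 - X i) = (\<Prod>i\<in>{1..n}. (-a) * (b * y0 + B i) * (X 0 - X i))"
        unfolding R0 prod.distrib by simp
      also have "\<dots> = (\<Prod>i\<in>{1..n}. (X i - X 0) * (a * B i - b * A 1))"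
      proof (rule prod.cong[OF refl])
        fix i
        have "a * y0 = - A 1" using ay0 by (simp add: algebra_simps)
        then show "(-a) * (b * y0 + B i) * (X 0 - X i) = (X i - X 0) * (a * B i - b * A 1)"
          by (simp add: algebra_simps)
      qed
      also have "\<dots> = (\<Prod>j\<in>{1..n}. X j - X 0) * (\<Prod>t\<in>{1..n}. a * B t - b * A 1)"
        by (simp add: prod.distrib)
      finally show ?thesis .
    qed
    have "det (KM ?m a b X A B) = R0 * cof 0 / Z * (\<Prod>i\<in>{1..n}. X 0 - X i)"
      unfolding main K_def R0_def valy0 ..
    also have "\<dots> = ((-a)^n * R0 * (\<Prod>i\<in>{1..n}. X 0 - X i)) * det (KM n a b (X \<circ> Suc) (A \<circ> Suc) (B \<circ> Suc))"
      unfolding cof0 c1 using Znz by (simp add: field_simps)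
    also have "\<dots> = (\<Prod>i<?m. \<Prod>j\<in>{i<..<?m}. X j - X i) *
     (\<Prod>s<?m. \<Prod>t\<in>{1..<?m-s}. a * B (s+t) - b * A (Suc s))"
      unfolding c2 IH RHS by (simp add: mult_ac)
    finally show ?thesis .
  qed
qed

definition Pb :: "nat \<Rightarrow> nat \<Rightarrow> nat \<Rightarrow> rat" where
  "Pb k x y = (of_nat x + 1 - (of_nat k - 1) * of_nat y) * fact (x+y) / (fact y * fact (x+1))"

lemma Pb_rec: "Pb k (Suc x) (Suc y) = Pb k x (Suc y) + Pb k (Suc x) y"
proof -
  have f1: "fact (Suc x + Suc y) = (of_nat x + of_nat y + 2) * (fact (Suc (x + y)) :: rat)"
    by (simp add: algebra_simps)
  have f2: "fact (x + Suc y) = (fact (Suc (x + y)) :: rat)" by simp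
  have f3: "fact (Suc x + y) = (fact (Suc (x + y)) :: rat)" by simp
  have f4: "fact (Suc y) = (of_nat y + 1) * (fact y :: rat)" by (simp add: algebra_simps)
  have f5: "fact (Suc x + 1) = (of_nat x + 2) * (fact (x+1) :: rat)" by (simp add: algebra_simps)
  have f6: "fact (Suc x) = (fact (x+1) :: rat)" by simp
  have p: "fact y \<noteq> (0::rat)" "fact (x+1) \<noteq> (0::rat)" by auto
  have key: "\<And>X Y K F Fy Fx :: rat. X \<ge> 0 \<Longrightarrow> Y \<ge> 0 \<Longrightarrow> Fy \<noteq> 0 \<Longrightarrow> Fx \<noteq> 0 \<Longrightarrow>
     (1 + X + 1 - (K-1)*(1+Y)) * ((X+Y+2)*F) / ((Y+1)*Fy * ((X+2)*Fx)) =
     (X + 1 - (K-1)*(1+Y)) * F / ((Y+1)*Fy*Fx) + (1+X+1-(K-1)*Y) * F / (Fy * ((X+2)*Fx))"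
  proof -
    fix X Y K F Fy Fx :: rat assume h: "X \<ge> 0" "Y \<ge> 0" "Fy \<noteq> 0" "Fx \<noteq> 0"
    have d: "Y + 1 \<noteq> 0" "X + 2 \<noteq> 0" using h by linarith+
    have d1: "(Y+1)*Fy * ((X+2)*Fx) \<noteq> 0" "(Y+1)*Fy*Fx \<noteq> 0" "Fy * ((X+2)*Fx) \<noteq> 0" using d h by auto
    have d2: "(Y+1)*Fy*Fx * (Fy * ((X+2)*Fx)) \<noteq> 0" using d1 by simp
    show "(1 + X + 1 - (K-1)*(1+Y)) * ((X+Y+2)*F) / ((Y+1)*Fy * ((X+2)*Fx)) =
     (X + 1 - (K-1)*(1+Y)) * F / ((Y+1)*Fy*Fx) + (1+X+1-(K-1)*Y) * F / (Fy * ((X+2)*Fx))"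
      unfolding add_frac_eq[OF d1(2) d1(3)] frac_eq_eq[OF d1(1) d2] by (simp add: algebra_simps)
  qed
  show ?thesis unfolding Pb_def f1 f2 f3 f4 f5 f6 of_nat_Suc
    by (rule key) (use p in auto)
qed

lemma Pb_sum:
  assumes "k \<ge> 2" and that: "x0 = (k-1)*(Suc y) - 1"
  shows "Pb k (x0 + d) (Suc y) = (\<Sum>s\<in>{Suc x0..x0+d}. Pb k s y)"
proof (induction d)
  case 0
  have "Suc x0 = (k-1)*(Suc y)" using that assms by (simp add: Suc_diff_1)
  then have "(of_nat x0 + 1 :: rat) = (of_nat k - 1) * of_nat (Suc y)"
    using assms by (metis of_nat_1 of_nat_Suc of_nat_diff of_nat_mult le_trans one_le_numeral add.commute)
  then show ?case by (simp add: Pb_def)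
next
  case (Suc d)
  have "Pb k (x0 + Suc d) (Suc y) = Pb k (x0 + d) (Suc y) + Pb k (Suc (x0 + d)) y"
    using Pb_rec[of k "x0+d" y] by simp
  then show ?case using Suc by simp
qed

definition Vs :: "nat \<Rightarrow> nat \<Rightarrow> (nat \<Rightarrow> rat) set" where
  "Vs k c = {f. \<exists>w. (\<forall>s<k-1. w s = 0) \<and> (\<forall>\<alpha>. f \<alpha> = (\<Sum>s<c. w s * Pb k ((k-1)*\<alpha>+s) \<alpha>))}"

lemma Vs_0: "(\<lambda>_. 0) \<in> Vs k c"
  unfolding Vs_def by (rule CollectI, rule exI[of _ "\<lambda>_. 0"]) simp

lemma Vs_add: "f \<in> Vs k c \<Longrightarrow> g \<in> Vs k c \<Longrightarrow> (\<lambda>\<alpha>. f \<alpha> + g \<alpha>) \<in> Vs k c"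
  unfolding Vs_def
proof (clarify)
  fix wf wg assume h: "\<forall>s<k-1. wf s = 0" "\<forall>\<alpha>. f \<alpha> = (\<Sum>s<c. wf s * Pb k ((k-1)*\<alpha>+s) \<alpha>)"
    "\<forall>s<k-1. wg s = 0" "\<forall>\<alpha>. g \<alpha> = (\<Sum>s<c. wg s * Pb k ((k-1)*\<alpha>+s) \<alpha>)"
  show "\<exists>w. (\<forall>s<k-1. w s = 0) \<and> (\<forall>\<alpha>. f \<alpha> + g \<alpha> = (\<Sum>s<c. w s * Pb k ((k-1)*\<alpha>+s) \<alpha>))"
    by (rule exI[of _ "\<lambda>s. wf s + wg s"]) (simp add: h sum.distrib ring_distribs)
qed

lemma Vs_sum: "finite S \<Longrightarrow> (\<And>x. x \<in> S \<Longrightarrow> F x \<in> Vs k c) \<Longrightarrow> (\<lambda>\<alpha>. \<Sum>x\<in>S. F x \<alpha>) \<in> Vs k c"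
proof (induction S rule: finite_induct)
  case empty
  then show ?case using Vs_0 by simp
next
  case (insert x S)
  then show ?case using Vs_add[of "F x" k c "\<lambda>\<alpha>. \<Sum>x\<in>S. F x \<alpha>"] by simp
qed

lemma Vs_D: "k-1 \<le> s \<Longrightarrow> s < c \<Longrightarrow> (\<lambda>\<alpha>. Pb k ((k-1)*\<alpha>+s) \<alpha>) \<in> Vs k c"
proof -
  assume s: "k-1 \<le> s" "s < c"
  have "(\<Sum>t<c. (if t = s then 1 else 0) * Pb k ((k-1)*\<alpha>+t) \<alpha>) = Pb k ((k-1)*\<alpha>+s) \<alpha>" for \<alpha>
  proof -
    have "(\<Sum>t<c. (if t = s then 1 else 0) * Pb k ((k-1)*\<alpha>+t) \<alpha>) = (\<Sum>t<c. if t = s then Pb k ((k-1)*\<alpha>+t) \<alpha> else 0)"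
      by (rule sum.cong) auto
    then show ?thesis using s by simp
  qed
  then show ?thesis unfolding Vs_def using s
    by (intro CollectI exI[of _ "\<lambda>t. if t = s then 1 else 0"]) auto
qed

lemma Vs_mono: assumes "c' \<le> c" "f \<in> Vs k c'" shows "f \<in> Vs k c"
proof -
  from assms(2) obtain w where w: "\<forall>s<k-1. w s = 0" "\<forall>\<alpha>. f \<alpha> = (\<Sum>s<c'. w s * Pb k ((k-1)*\<alpha>+s) \<alpha>)"
    unfolding Vs_def by auto
  have "f \<alpha> = (\<Sum>s<c. (if s < c' then w s else 0) * Pb k ((k-1)*\<alpha>+s) \<alpha>)" for \<alpha>
  proof -
    have "(\<Sum>s<c. (if s < c' then w s else 0) * Pb k ((k-1)*\<alpha>+s) \<alpha>) =
       (\<Sum>s<c. if s < c' then w s * Pb k ((k-1)*\<alpha>+s) \<alpha> else 0)"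
      by (rule sum.cong) auto
    also have "\<dots> = (\<Sum>s\<in>{s\<in>{..<c}. s < c'}. w s * Pb k ((k-1)*\<alpha>+s) \<alpha>)"
      by (rule sum.inter_filter[symmetric]) simp
    also have "{s\<in>{..<c}. s < c'} = {..<c'}" using assms(1) by auto
    finally show ?thesis using w(2) by simp
  qed
  then show ?thesis unfolding Vs_def using w(1) by (intro CollectI exI[of _ "\<lambda>s. if s < c' then w s else 0"]) auto
qed

lemma level:
  assumes k: "k \<ge> 2"
  shows "(k-1)*d \<le> c \<Longrightarrow> (\<lambda>\<alpha>. Pb k ((k-1)*\<alpha>+c) (\<alpha>+d) - Pb k ((k-1)*\<alpha>+c) \<alpha>) \<in> Vs k c"
proof (induction d arbitrary: c)
  case 0
  then show ?case using Vs_0 by simp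
next
  case (Suc d)
  have sumEq: "Pb k ((k-1)*\<alpha>+c) (\<alpha> + Suc d) = (\<Sum>c'\<in>{(k-1)*Suc d..c}. Pb k ((k-1)*\<alpha>+c') (\<alpha>+d))" for \<alpha>
  proof -
    define x0 where "x0 = (k-1)*Suc (\<alpha>+d) - 1"
    define dd where "dd = (k-1)*\<alpha>+c - x0"
    have ge: "(k-1)*Suc (\<alpha>+d) \<ge> 1" using k by simp
    have "Suc x0 = (k-1)*Suc (\<alpha>+d)" unfolding x0_def using ge by simp
    also have "\<dots> = (k-1)*(Suc d + \<alpha>)" by simp
    also have "\<dots> = (k-1)*Suc d + (k-1)*\<alpha>" by (rule distrib_left)
    finally have sx0: "Suc x0 = (k-1)*Suc d + (k-1)*\<alpha>" .
    have xd: "x0 + dd = c + (k-1)*\<alpha>" unfolding dd_def using sx0 Suc.prems by simp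
    have "Pb k (x0 + dd) (Suc (\<alpha>+d)) = (\<Sum>s\<in>{Suc x0..x0+dd}. Pb k s (\<alpha>+d))"
      by (rule Pb_sum[OF k x0_def])
    also have "\<dots> = (\<Sum>s\<in>{(k-1)*Suc d + (k-1)*\<alpha>..c + (k-1)*\<alpha>}. Pb k s (\<alpha>+d))" unfolding sx0 xd ..
    also have "\<dots> = (\<Sum>c'\<in>{(k-1)*Suc d..c}. Pb k (c' + (k-1)*\<alpha>) (\<alpha>+d))"
      by (rule sum.shift_bounds_cl_nat_ivl)
    finally show ?thesis unfolding xd by (simp add: add.commute)
  qed
  define F where "F c' \<alpha> = (Pb k ((k-1)*\<alpha>+c') (\<alpha>+d) - Pb k ((k-1)*\<alpha>+c') \<alpha>) + Pb k ((k-1)*\<alpha>+c') \<alpha>" for c' \<alpha>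
  have eq: "(\<lambda>\<alpha>. Pb k ((k-1)*\<alpha>+c) (\<alpha>+Suc d) - Pb k ((k-1)*\<alpha>+c) \<alpha>) =
    (\<lambda>\<alpha>. (\<Sum>c'\<in>{(k-1)*Suc d..<c}. F c' \<alpha>) + (Pb k ((k-1)*\<alpha>+c) (\<alpha>+d) - Pb k ((k-1)*\<alpha>+c) \<alpha>))"
  proof
    fix \<alpha>
    show "Pb k ((k-1)*\<alpha>+c) (\<alpha>+Suc d) - Pb k ((k-1)*\<alpha>+c) \<alpha> =
      (\<Sum>c'\<in>{(k-1)*Suc d..<c}. F c' \<alpha>) + (Pb k ((k-1)*\<alpha>+c) (\<alpha>+d) - Pb k ((k-1)*\<alpha>+c) \<alpha>)"
      unfolding sumEq sum.last_plus[OF Suc.prems] F_def by simp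
  qed
  have "(\<lambda>\<alpha>. \<Sum>c'\<in>{(k-1)*Suc d..<c}. F c' \<alpha>) \<in> Vs k c"
  proof (rule Vs_sum)
    fix c' assume c': "c' \<in> {(k-1)*Suc d..<c}"
    have "(\<lambda>\<alpha>. Pb k ((k-1)*\<alpha>+c') (\<alpha>+d) - Pb k ((k-1)*\<alpha>+c') \<alpha>) \<in> Vs k c"
      by (rule Vs_mono[of c'], use c' in simp, rule Suc.IH) (use c' in auto)
    moreover have "(\<lambda>\<alpha>. Pb k ((k-1)*\<alpha>+c') \<alpha>) \<in> Vs k c"
      by (rule Vs_D) (use c' k in auto)
    ultimately show "F c' \<in> Vs k c" unfolding F_def using Vs_add by blast
  qed simp
  moreover have "(\<lambda>\<alpha>. Pb k ((k-1)*\<alpha>+c) (\<alpha>+d) - Pb k ((k-1)*\<alpha>+c) \<alpha>) \<in> Vs k c"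
    by (rule Suc.IH) (use Suc.prems in simp)
  ultimately show ?case unfolding eq using Vs_add by blast
qed

lemma gc_Pb:
  assumes k: "k \<ge> 2" and q: "(k-1)*q \<le> m"
  shows "of_nat (m - (k-1)*q + 1) / of_nat (m + q + 1) * of_nat ((m + q + 1) choose (m + 1)) = Pb k m q"
proof -
  have b: "(of_nat ((m + q + 1) choose (m + 1)) :: rat) = fact (m+q+1) / (fact (m+1) * fact q)"
    by (subst binomial_fact) auto
  have f: "(fact (m+q+1) :: rat) = of_nat (m+q+1) * fact (m+q)" by simp
  have d: "(of_nat (m - (k-1)*q + 1) :: rat) = of_nat m + 1 - (of_nat k - 1) * of_nat q"
    using q k by (simp add: of_nat_diff)
  have nz: "(of_nat (m+q+1) :: rat) \<noteq> 0" by simp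
  have key: "\<And>A N F G H :: rat. N \<noteq> 0 \<Longrightarrow> G \<noteq> 0 \<Longrightarrow> H \<noteq> 0 \<Longrightarrow> A / N * (N * F / (G * H)) = A * F / (H * G)"
    by (simp add: field_simps)
  show ?thesis unfolding b f d Pb_def by (rule key) auto
qed

lemma gc_eq:
  assumes k: "k \<ge> 2"
  shows "gen_catalan ((k-1)*\<alpha> + c) k = Pb k ((k-1)*\<alpha> + c) (\<alpha> + c div (k-1))"
proof -
  have qd: "((k-1)*\<alpha> + c) div (k-1) = \<alpha> + c div (k-1)" using k by simp
  have "(k-1)*(\<alpha> + c div (k-1)) \<le> (k-1)*\<alpha> + c"
    by (simp add: distrib_left)
  then show ?thesis unfolding gen_catalan_def Let_def qd by (rule gc_Pb[OF k])
qed

lemma fact_FL1: "(fact (m + j) :: rat) = fact m * (\<Prod>t\<in>{1..j}. of_nat m + of_nat t)"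
  by (induction j) (simp_all add: algebra_simps)

lemma fact_FL0: "(fact (m + r) :: rat) = fact m * (\<Prod>s<r. of_nat m + of_nat s + 1)"
  by (induction r) (simp_all add: algebra_simps)

lemma fact_FL2: "j < n \<Longrightarrow> (fact (C + n) :: rat) = fact (C + j + 1) * (\<Prod>t\<in>{Suc j..<n}. of_nat C + of_nat t + 1)"
proof (induction n)
  case 0 then show ?case by simp
next
  case (Suc n)
  show ?case
  proof (cases "j = n")
    case True then show ?thesis by simp
  next
    case False
    then have "j < n" using Suc.prems by simp
    then show ?thesis using Suc.IH by (simp add: algebra_simps)
  qed
qed

lemma prod_triangle_swap:
  fixes n :: nat
  shows "(\<Prod>s<n. \<Prod>t<n-s. f s t) = (\<Prod>t<n. \<Prod>s<n-t. (f s t :: 'a :: comm_monoid_mult))"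
proof -
  have "(\<Prod>s<n. \<Prod>t<n-s. f s t) = prod (\<lambda>(s,t). f s t) (SIGMA s:{..<n}. {..<n-s})"
    using prod.Sigma[of "{..<n}" "\<lambda>s. {..<n-s}" "\<lambda>s t. f s t"] by simp
  also have "\<dots> = prod (\<lambda>(t,s). f s t) (SIGMA t:{..<n}. {..<n-t})"
    by (rule prod.reindex_bij_witness[where i="\<lambda>(t,s). (s,t)" and j="\<lambda>(s,t). (t,s)"]) auto
  also have "\<dots> = (\<Prod>t<n. \<Prod>s<n-t. f s t)"
    using prod.Sigma[of "{..<n}" "\<lambda>t. {..<n-t}" "\<lambda>t s. f s t"] by simp
  finally show ?thesis .
qed

lemma const_eq:
  assumes k: "k \<ge> 1"
  shows "(\<Prod>j<n. of_nat (\<beta>+j) + 1 :: rat) *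
    (\<Prod>s<n. \<Prod>t\<in>{1..<n-s}. of_nat k * (of_nat \<beta> + of_nat (s+t) + 1) - (of_nat k - 1) * (of_nat \<beta> + of_nat (Suc s))) =
    (\<Prod>i<n. fact ((k-1)*i+\<beta>+n) / fact (k*i+\<beta>))"
proof -
  define g where "g s t = (of_nat (\<beta> + s + 1 + k*t) :: rat)" for s t
  have t1: "of_nat k * (of_nat \<beta> + of_nat (s+t) + 1) - (of_nat k - 1) * (of_nat \<beta> + of_nat (Suc s)) = g s t" for s t
    unfolding g_def by (simp add: algebra_simps)
  have t2: "(of_nat (\<beta>+s) + 1 :: rat) * (\<Prod>t\<in>{1..<n-s}. g s t) = (\<Prod>t<n-s. g s t)" if "s < n" for s
  proof -
    have "{..<n-s} = insert 0 {1..<n-s}" using that by auto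
    then show ?thesis by (simp add: g_def)
  qed
  have "(\<Prod>j<n. of_nat (\<beta>+j) + 1 :: rat) *
    (\<Prod>s<n. \<Prod>t\<in>{1..<n-s}. of_nat k * (of_nat \<beta> + of_nat (s+t) + 1) - (of_nat k - 1) * (of_nat \<beta> + of_nat (Suc s)))
    = (\<Prod>s<n. (of_nat (\<beta>+s) + 1) * (\<Prod>t\<in>{1..<n-s}. g s t))"
    unfolding t1 prod.distrib ..
  also have "\<dots> = (\<Prod>s<n. \<Prod>t<n-s. g s t)" by (rule prod.cong[OF refl], rule t2) simp
  also have "\<dots> = (\<Prod>t<n. \<Prod>s<n-t. g s t)" by (rule prod_triangle_swap)
  also have "\<dots> = (\<Prod>i<n. fact ((k-1)*i+\<beta>+n) / fact (k*i+\<beta>))"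
  proof (rule prod.cong[OF refl])
    fix i assume "i \<in> {..<n}"
    then have i: "i < n" by simp
    have ki: "i \<le> k*i" using k by simp
    have km: "(k-1)*i = k*i - i" by (simp add: diff_mult_distrib)
    have e: "(k-1)*i+\<beta>+n = (k*i+\<beta>) + (n-i)" unfolding km using ki i by arith
    have "(fact ((k-1)*i+\<beta>+n) :: rat) = fact (k*i+\<beta>) * (\<Prod>s<n-i. of_nat (k*i+\<beta>) + of_nat s + 1)"
      unfolding e by (rule fact_FL0)
    moreover have "(\<Prod>s<n-i. of_nat (k*i+\<beta>) + of_nat s + 1) = (\<Prod>s<n-i. g s i)"
      by (rule prod.cong) (auto simp: g_def algebra_simps)
    ultimately show "(\<Prod>s<n-i. g s i) = fact ((k-1)*i+\<beta>+n) / fact (k*i+\<beta>)" by simp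
  qed
  finally show ?thesis .
qed

lemma D_expand:
  assumes k: "k \<ge> 2" and j: "j < n"
  shows "Pb k ((k-1)*\<alpha> + (\<beta>+j)) \<alpha> =
    (fact (k*\<alpha>+\<beta>) / (fact \<alpha> * fact ((k-1)*\<alpha>+\<beta>+n))) * (of_nat (\<beta>+j) + 1) *
    ((\<Prod>t\<in>{1..j}. of_nat k * of_nat \<alpha> + (of_nat \<beta> + of_nat t)) *
     (\<Prod>t\<in>{Suc j..<n}. (of_nat k - 1) * of_nat \<alpha> + (of_nat \<beta> + of_nat t + 1)))"
proof -
  define C where "C = (k-1)*\<alpha>+\<beta>"
  define P1 where "P1 = (\<Prod>t\<in>{1..j}. of_nat k * of_nat \<alpha> + (of_nat \<beta> + of_nat t) :: rat)"
  define P2 where "P2 = (\<Prod>t\<in>{Suc j..<n}. (of_nat k - 1) * of_nat \<alpha> + (of_nat \<beta> + of_nat t + 1) :: rat)"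
  have ofk: "(of_nat ((k-1)*\<alpha>) :: rat) = (of_nat k - 1) * of_nat \<alpha>" using k by (simp add: of_nat_diff)
  have h1: "(of_nat ((k-1)*\<alpha> + (\<beta>+j)) + 1 - (of_nat k - 1) * of_nat \<alpha> :: rat) = of_nat (\<beta>+j) + 1"
    using ofk by simp
  have ka: "\<alpha> \<le> k*\<alpha>" using k by simp
  have kma: "(k-1)*\<alpha> = k*\<alpha> - \<alpha>" by (simp add: diff_mult_distrib)
  have h2: "(k-1)*\<alpha> + (\<beta>+j) + \<alpha> = (k*\<alpha>+\<beta>) + j" unfolding kma using ka by arith
  have h3: "(k-1)*\<alpha> + (\<beta>+j) + 1 = C + j + 1" unfolding C_def by simp
  have F1: "(fact ((k*\<alpha>+\<beta>) + j) :: rat) = fact (k*\<alpha>+\<beta>) * P1"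
    unfolding fact_FL1 P1_def by (rule arg_cong[where f="\<lambda>x. _ * x"], rule prod.cong) auto
  have F2: "(fact ((k-1)*\<alpha>+\<beta>+n) :: rat) = fact (C + j + 1) * P2"
    unfolding C_def[symmetric] fact_FL2[OF j] P2_def
    using k by (intro arg_cong[where f="\<lambda>x. _ * x"] prod.cong) (auto simp: C_def ofk of_nat_diff)
  have "0 < P2" unfolding P2_def
  proof (rule prod_pos)
    fix t
    have "0 \<le> (of_nat k - 1::rat) * of_nat \<alpha>" using k by simp
    moreover have "0 < of_nat \<beta> + of_nat t + (1::rat)" by (simp add: add_nonneg_pos)
    ultimately show "0 < (of_nat k - 1) * of_nat \<alpha> + (of_nat \<beta> + of_nat t + 1 :: rat)" by linarith
  qed
  then have P2nz: "P2 \<noteq> 0" by simp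
  have fnz: "(fact \<alpha> :: rat) \<noteq> 0" "(fact (C+j+1) :: rat) \<noteq> 0" by auto
  have key: "\<And>N F0 Fa Fc Q1 Q2 :: rat. Q2 \<noteq> 0 \<Longrightarrow> Fa \<noteq> 0 \<Longrightarrow> Fc \<noteq> 0 \<Longrightarrow>
     N * (F0 * Q1) / (Fa * Fc) = F0 / (Fa * (Fc * Q2)) * N * (Q1 * Q2)"
    by (simp add: field_simps)
  show ?thesis unfolding P1_def[symmetric] P2_def[symmetric] Pb_def h1 h2 h3 F1 F2
    by (rule key[OF P2nz fnz])
qed

theorem theorem6:
  fixes n k \<beta> :: nat and \<alpha> :: "nat \<Rightarrow> nat"
  assumes "n \<ge> 1" and "k \<ge> 2" and "\<beta> \<le> k - 1"
  shows "det (mat n n (\<lambda>(i, j). gen_catalan ((k - 1) * \<alpha> i + j + \<beta>) k)) =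
    (\<Prod>i<n. \<Prod>j\<in>{i<..<n}. (of_nat (\<alpha> j) - of_nat (\<alpha> i) :: rat)) *
    (\<Prod>i<n. (of_nat (fact ((k - 1) * i + \<beta> + n)) * of_nat (fact (k * \<alpha> i + \<beta>)))
           / (of_nat (fact (k * i + \<beta>)) * of_nat (fact (\<alpha> i))
              * of_nat (fact ((k - 1) * \<alpha> i + \<beta> + n))))"
proof -
  have k: "k \<ge> 2" by (rule assms(2))
  define D where "D a c = Pb k ((k-1)*a + c) a" for a c
  have ex: "\<forall>c. \<exists>w. (\<forall>s<k-1. w s = 0) \<and> (\<forall>a. gen_catalan ((k-1)*a + c) k - D a c = (\<Sum>s<c. w s * D a s))"
  proof
    fix c
    have dm: "c div (k-1) * (k-1) + c mod (k-1) = c" by (rule div_mult_mod_eq)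
    have "(k-1)*(c div (k-1)) \<le> c" using dm by (simp add: mult.commute)
    then have "(\<lambda>a. Pb k ((k-1)*a+c) (a + c div (k-1)) - Pb k ((k-1)*a+c) a) \<in> Vs k c"
      by (rule level[OF k])
    then show "\<exists>w. (\<forall>s<k-1. w s = 0) \<and> (\<forall>a. gen_catalan ((k-1)*a + c) k - D a c = (\<Sum>s<c. w s * D a s))"
      unfolding Vs_def D_def gc_eq[OF k] by auto
  qed
  from choice[OF ex] obtain W where W: "\<And>c. (\<forall>s<k-1. W c s = 0) \<and> (\<forall>a. gen_catalan ((k-1)*a + c) k - D a c = (\<Sum>s<c. W c s * D a s))"
    by blast
  define N where "N i j = D (\<alpha> i) (\<beta> + j)" for i j
  have entry: "gen_catalan ((k-1)*\<alpha> i + j + \<beta>) k = N i j + (\<Sum>s<j. W (\<beta>+j) (\<beta>+s) * N i s)" for i j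
  proof -
    have e: "(k-1)*\<alpha> i + j + \<beta> = (k-1)*\<alpha> i + (\<beta>+j)" by simp
    have "gen_catalan ((k-1)*\<alpha> i + j + \<beta>) k = D (\<alpha> i) (\<beta>+j) + (\<Sum>s<\<beta>+j. W (\<beta>+j) s * D (\<alpha> i) s)"
      unfolding e using W[of "\<beta>+j"] by (metis add_diff_cancel_left' add.commute diff_add_cancel)
    also have "(\<Sum>s<\<beta>+j. W (\<beta>+j) s * D (\<alpha> i) s) = (\<Sum>s<j. W (\<beta>+j) (\<beta>+s) * N i s)"
    proof -
      have u: "{..<\<beta>+j} = {..<\<beta>} \<union> {\<beta>..<\<beta>+j}" by auto
      have z: "(\<Sum>s<\<beta>. W (\<beta>+j) s * D (\<alpha> i) s) = 0"
        using W[of "\<beta>+j"] assms(3) by (intro sum.neutral) auto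
      have "(\<Sum>s\<in>{\<beta>..<\<beta>+j}. W (\<beta>+j) s * D (\<alpha> i) s) = (\<Sum>s\<in>{0+\<beta>..<j+\<beta>}. W (\<beta>+j) s * D (\<alpha> i) s)"
        by (simp add: add.commute)
      also have "\<dots> = (\<Sum>s\<in>{0..<j}. W (\<beta>+j) (s+\<beta>) * D (\<alpha> i) (s+\<beta>))"
        by (rule sum.shift_bounds_nat_ivl)
      also have "\<dots> = (\<Sum>s<j. W (\<beta>+j) (\<beta>+s) * N i s)"
        by (simp add: N_def add.commute atLeast0LessThan)
      finally show ?thesis unfolding u by (subst sum.union_disjoint) (auto simp: z)
    qed
    finally show ?thesis unfolding N_def by simp
  qed
  have step1: "det (mat n n (\<lambda>(i, j). gen_catalan ((k - 1) * \<alpha> i + j + \<beta>) k)) = det (mat n n (\<lambda>(i,j). N i j))"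
    unfolding entry by (rule det_colop)
  define g where "g i = (fact (k*\<alpha> i+\<beta>) / (fact (\<alpha> i) * fact ((k-1)*\<alpha> i+\<beta>+n)) :: rat)" for i
  define h where "h j = (of_nat (\<beta>+j) + 1 :: rat)" for j
  define M where "M i j = (\<Prod>t\<in>{1..j}. of_nat k * of_nat (\<alpha> i) + (of_nat \<beta> + of_nat t)) *
     (\<Prod>t\<in>{Suc j..<n}. (of_nat k - 1) * of_nat (\<alpha> i) + (of_nat \<beta> + of_nat t + 1 :: rat))" for i j
  have step2: "mat n n (\<lambda>(i,j). N i j) = mat n n (\<lambda>(i,j). g i * h j * M i j)"
  proof (rule eq_matI)
    fix i j assume "i < dim_row (mat n n (\<lambda>(i,j). g i * h j * M i j))" "j < dim_col (mat n n (\<lambda>(i,j). g i * h j * M i j))"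
    then have i: "i < n" and j: "j < n" by auto
    show "mat n n (\<lambda>(i,j). N i j) $$ (i,j) = mat n n (\<lambda>(i,j). g i * h j * M i j) $$ (i,j)"
      using i j D_expand[OF k j, of "\<alpha> i" \<beta>] by (simp add: N_def D_def g_def h_def M_def)
  qed auto
  have KMeq: "mat n n (\<lambda>(i,j). M i j) = KM n (of_nat k) (of_nat k - 1) (\<lambda>i. of_nat (\<alpha> i))
      (\<lambda>t. of_nat \<beta> + of_nat t) (\<lambda>t. of_nat \<beta> + of_nat t + 1)"
    unfolding KM_def M_def by simp
  have kr: "det (KM n (of_nat k) (of_nat k - 1) (\<lambda>i. of_nat (\<alpha> i))
      (\<lambda>t. of_nat \<beta> + of_nat t) (\<lambda>t. of_nat \<beta> + of_nat t + 1)) =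
    (\<Prod>i<n. \<Prod>j\<in>{i<..<n}. (of_nat (\<alpha> j) - of_nat (\<alpha> i) :: rat)) *
    (\<Prod>s<n. \<Prod>t\<in>{1..<n-s}. of_nat k * (of_nat \<beta> + of_nat (s+t) + 1) - (of_nat k - 1) * (of_nat \<beta> + of_nat (Suc s)))"
  proof (rule kratt)
    show "(of_nat k :: rat) \<noteq> 0" using k by simp
    fix i t :: nat assume "0 < t"
    then have "0 < (of_nat k * of_nat (\<alpha> i) + (of_nat \<beta> + of_nat t) :: rat)"
      by (simp add: add_nonneg_pos)
    then show "(of_nat k * of_nat (\<alpha> i) + (of_nat \<beta> + of_nat t) :: rat) \<noteq> 0" by simp
  qed
  have ce: "(\<Prod>j<n. h j) *
    (\<Prod>s<n. \<Prod>t\<in>{1..<n-s}. of_nat k * (of_nat \<beta> + of_nat (s+t) + 1) - (of_nat k - 1) * (of_nat \<beta> + of_nat (Suc s))) =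
    (\<Prod>i<n. fact ((k-1)*i+\<beta>+n) / fact (k*i+\<beta>))"
    unfolding h_def by (rule const_eq) (use k in simp)
  have fin: "(\<Prod>i<n. (of_nat (fact ((k - 1) * i + \<beta> + n)) * of_nat (fact (k * \<alpha> i + \<beta>)))
           / (of_nat (fact (k * i + \<beta>)) * of_nat (fact (\<alpha> i))
              * of_nat (fact ((k - 1) * \<alpha> i + \<beta> + n))) :: rat) =
     (\<Prod>i<n. g i) * (\<Prod>i<n. fact ((k-1)*i+\<beta>+n) / fact (k*i+\<beta>))"
  proof -
    have "(\<Prod>i<n. (of_nat (fact ((k - 1) * i + \<beta> + n)) * of_nat (fact (k * \<alpha> i + \<beta>)))
           / (of_nat (fact (k * i + \<beta>)) * of_nat (fact (\<alpha> i))
              * of_nat (fact ((k - 1) * \<alpha> i + \<beta> + n))) :: rat) =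
      (\<Prod>i<n. g i * (fact ((k-1)*i+\<beta>+n) / fact (k*i+\<beta>)))"
      by (rule prod.cong[OF refl]) (simp add: g_def field_simps)
    also have "\<dots> = (\<Prod>i<n. g i) * (\<Prod>i<n. fact ((k-1)*i+\<beta>+n) / fact (k*i+\<beta>))"
      by (rule prod.distrib)
    finally show ?thesis .
  qed
  show ?thesis
    unfolding step1 step2 det_scale KMeq kr fin ce[symmetric] by (simp add: mult_ac)
qed

end
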